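(* Let $0\le\epsilon\le1/3$, let $f(x)=\frac{1+\epsilon-2x}{1-\epsilon}$, and for an integer $n\ge1$ define the polynomial $C_n(x):=1-\frac{T_n(f(x))}{T_n(f(0))}$, where $T_n$ is the Chebyshev polynomial of degree $n$. Then for any sequence $\boldsymbol\lambda=(\lambda_1,\dots,\lambda_d)$ with $0\le\lambda_i\le1$, $$\gamma_2(\mathcal D_{C_n,\boldsymbol\lambda})\le6n^2-3.$$
   Context: The Chebyshev polynomial $T_n$ is defined by $T_n(\cos\theta)=\cos(n\theta)$. For a continuously differentiable $h$ and a sequence $\boldsymbol\lambda=(\lambda_1,\dots,\lambda_d)$, $\mathcal D_{h,\boldsymbol\lambda}$ is the $d\times d$ matrix with entries $(\mathcal D_{h,\boldsymbol\lambda})_{ij}=\frac{h(\lambda_i)-h(\lambda_j)}{\lambda_i-\lambda_j}$ if $\lambda_i\ne\lambda_j$ and $h'(\lambda_i)$ if $\lambda_i=\lambda_j$. For a $d\times d$ matrix $\mathbf M$, $\gamma_2(\mathbf M)=\inf\max\big(\{\|v_i\|^2:1\le i\le d\}\cup\{\|w_j\|^2:1\le j\le d\}\big)$, the infimum over all families of vectors $v_i,w_j$ with $\mathbf M_{ij}=\langle v_i|w_j\rangle$ for all $i,j$. *)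

theory Defs
  imports "HOL-Analysis.Analysis" "HOL-Computational_Algebra.Polynomial"
begin

fun cheb_T :: "nat \<Rightarrow> real poly" where
  "cheb_T 0 = 1"
| "cheb_T (Suc 0) = [:0, 1:]"
| "cheb_T (Suc (Suc n)) = [:0, 2:] * cheb_T (Suc n) - cheb_T n"

definition cheb_f :: "real \<Rightarrow> real \<Rightarrow> real" where
  "cheb_f \<epsilon> x = (1 + \<epsilon> - 2 * x) / (1 - \<epsilon>)"

definition C_poly :: "nat \<Rightarrow> real \<Rightarrow> real \<Rightarrow> real" where
  "C_poly n \<epsilon> x = 1 - poly (cheb_T n) (cheb_f \<epsilon> x) / poly (cheb_T n) (cheb_f \<epsilon> 0)"

definition divdiff_mat :: "(real \<Rightarrow> real) \<Rightarrow> (nat \<Rightarrow> real) \<Rightarrow> nat \<Rightarrow> nat \<Rightarrow> real" where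
  "divdiff_mat h lam i j =
     (if lam i \<noteq> lam j then (h (lam i) - h (lam j)) / (lam i - lam j) else deriv h (lam i))"

text \<open>gamma_2 factorization norm of a d x d matrix M (indices below d): infimum over all
  factorizations M i j = <v_i, w_j> with vectors in R^m (any m) of the largest squared norm.\<close>
definition gamma2 :: "nat \<Rightarrow> (nat \<Rightarrow> nat \<Rightarrow> real) \<Rightarrow> real" where
  "gamma2 d M = Inf {c. 0 \<le> c \<and> (\<exists>(m::nat) (v::nat \<Rightarrow> nat \<Rightarrow> real) (w::nat \<Rightarrow> nat \<Rightarrow> real).
      (\<forall>i<d. \<forall>j<d. M i j = (\<Sum>k<m. v i k * w j k)) \<and>
      (\<forall>i<d. (\<Sum>k<m. (v i k)\<^sup>2) \<le> c) \<and> (\<forall>j<d. (\<Sum>k<m. (w j k)\<^sup>2) \<le> c))}"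

end

theory Submission
  imports Defs
begin


fun Tf :: "nat \<Rightarrow> 'a::comm_ring_1 \<Rightarrow> 'a" where
  "Tf 0 x = 1"
| "Tf (Suc 0) x = x"
| "Tf (Suc (Suc n)) x = 2 * x * Tf (Suc n) x - Tf n x"

fun Uf :: "nat \<Rightarrow> 'a::comm_ring_1 \<Rightarrow> 'a" where
  "Uf 0 x = 1"
| "Uf (Suc 0) x = 2 * x"
| "Uf (Suc (Suc n)) x = 2 * x * Uf (Suc n) x - Uf n x"

lemma poly_cheb_T: "poly (cheb_T n) x = Tf n x"
  by (induction n rule: cheb_T.induct) (auto simp: algebra_simps)

lemma Tf_of_real: "of_real (Tf n x) = (Tf n (of_real x) :: 'a::real_field)"
  by (induction n x rule: Tf.induct) auto

lemma Uf_of_real: "of_real (Uf n x) = (Uf n (of_real x) :: 'a::real_field)"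
  by (induction n x rule: Uf.induct) auto

fun Vf :: "'a::comm_ring_1 \<Rightarrow> 'a \<Rightarrow> nat \<Rightarrow> 'a" where
  "Vf z w 0 = 1"
| "Vf z w (Suc k) = z ^ Suc k + w * Vf z w k"

lemma Vf_alt: "Vf z w (Suc k) = w ^ Suc k + z * Vf z w k"
proof (induction k)
  case 0
  then show ?case by (simp add: algebra_simps)
next
  case (Suc k)
  have "Vf z w (Suc (Suc k)) = z ^ Suc (Suc k) + w * (w ^ Suc k + z * Vf z w k)"
    by (metis Vf.simps(2) Suc.IH)
  also have "\<dots> = w ^ Suc (Suc k) + z * (z ^ Suc k + w * Vf z w k)"
    by (simp add: algebra_simps)
  also have "\<dots> = w ^ Suc (Suc k) + z * Vf z w (Suc k)" by simp
  finally show ?case .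
qed

lemma Uf_step_aux:
  fixes z w a b v0 :: "'a::comm_ring_1"
  assumes "a = w ^ Suc n + z * v0" "b = w ^ Suc (Suc n) + z * a" "z * w = 1"
  shows "(z + w) * a - v0 = b"
proof -
  have "w * a = w ^ Suc (Suc n) + (z * w) * v0" using assms(1) by (simp add: algebra_simps)
  then have "w * a = w ^ Suc (Suc n) + v0" using assms(3) by simp
  then show ?thesis using assms(2) by (simp add: algebra_simps)
qed

lemma Tf_param:
  fixes z w x :: "'a::comm_ring_1"
  assumes zw: "z * w = 1" and s: "z + w = 2 * x"
  shows "2 * Tf n x = z ^ n + w ^ n \<and> 2 * Tf (Suc n) x = z ^ Suc n + w ^ Suc n"
proof (induction n)
  case 0
  then show ?case using s by simp
next
  case (Suc n)
  have e: "(z + w) * (z ^ Suc n + w ^ Suc n) = z ^ Suc (Suc n) + w ^ Suc (Suc n) + (z * w) * (z ^ n + w ^ n)"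
    by (simp add: algebra_simps)
  have "2 * Tf (Suc (Suc n)) x = (2 * x) * (2 * Tf (Suc n) x) - 2 * Tf n x"
    by (simp add: algebra_simps)
  also have "\<dots> = z ^ Suc (Suc n) + w ^ Suc (Suc n)"
    using Suc e zw s[symmetric] by simp
  finally show ?case using Suc by simp
qed

lemma Uf_param:
  fixes z w x :: "'a::comm_ring_1"
  assumes zw: "z * w = 1" and s: "z + w = 2 * x"
  shows "Uf n x = Vf z w n \<and> Uf (Suc n) x = Vf z w (Suc n)"
proof (induction n)
  case 0
  then show ?case using s by simp
next
  case (Suc n)
  have "Uf (Suc (Suc n)) x = (z + w) * Vf z w (Suc n) - Vf z w n"
    using Suc s by simp
  also have "\<dots> = Vf z w (Suc (Suc n))"
    by (rule Uf_step_aux[OF Vf_alt Vf_alt zw])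
  finally show ?case using Suc by simp
qed

lemma Vf_bound:
  fixes z w :: "'a::real_normed_field"
  assumes "norm z \<le> R" "norm w \<le> R"
  shows "norm (Vf z w k) \<le> real (Suc k) * R ^ k"
proof (induction k)
  case 0
  then show ?case by simp
next
  case (Suc k)
  have R0: "R \<ge> 0" using assms(1) norm_ge_zero order_trans by blast
  have "norm (Vf z w (Suc k)) \<le> norm z ^ Suc k + norm w * norm (Vf z w k)"
    by (simp add: norm_triangle_le norm_mult norm_power)
  also have "\<dots> \<le> R ^ Suc k + R * (real (Suc k) * R ^ k)"
    using assms Suc R0 by (intro add_mono power_mono mult_mono) auto
  also have "\<dots> = real (Suc (Suc k)) * R ^ Suc k" by (simp add: algebra_simps)
  finally show ?case .
qed

lemma TU_bound:
  fixes z w x :: "'a::real_normed_field"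
  assumes zw: "z * w = 1" and s: "z + w = 2 * x" and "norm z \<le> R" "norm w \<le> R"
  shows "norm (Tf k x) \<le> R ^ k" "norm (Uf k x) \<le> real (Suc k) * R ^ k"
proof -
  have "2 * norm (Tf k x) = norm (2 * Tf k x)" by (simp add: norm_mult)
  also have "\<dots> = norm (z ^ k + w ^ k)" using Tf_param[OF zw s] by simp
  also have "\<dots> \<le> norm z ^ k + norm w ^ k" by (simp add: norm_triangle_le norm_power)
  also have "\<dots> \<le> R ^ k + R ^ k" using assms by (intro add_mono power_mono) auto
  finally show "norm (Tf k x) \<le> R ^ k" by simp
  show "norm (Uf k x) \<le> real (Suc k) * R ^ k"
    using Uf_param[OF zw s] Vf_bound assms by metis
qed

lemma cheb_bounds:
  fixes Y t :: real
  assumes Y1: "1 \<le> Y" and t: "-1 \<le> t" "t \<le> Y"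
  shows "\<bar>Tf k t\<bar> \<le> (Y + sqrt (Y^2 - 1)) ^ k \<and> \<bar>Uf k t\<bar> \<le> real (Suc k) * (Y + sqrt (Y^2 - 1)) ^ k"
proof -
  define r where "r = Y + sqrt (Y^2 - 1)"
  have "0 \<le> Y^2 - 1" using Y1 by (simp add: one_le_power)
  then have r1: "r \<ge> 1" unfolding r_def using Y1 real_sqrt_ge_zero[of "Y^2-1"] by linarith
  show ?thesis
  proof (cases "t \<le> 1")
    case True
    define b where "b = sqrt (1 - t^2)"
    have b2: "b^2 = 1 - t^2" unfolding b_def using True t by (simp add: abs_square_le_1)
    define z where "z = Complex t b"
    define w where "w = Complex t (- b)"
    have zw: "z * w = 1" unfolding z_def w_def using b2 by (simp add: complex_eq_iff power2_eq_square)
    have s: "z + w = 2 * complex_of_real t" unfolding z_def w_def by (simp add: complex_eq_iff)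
    have nz: "norm z \<le> 1" unfolding z_def using b2 by (simp add: cmod_def)
    have nw: "norm w \<le> 1" unfolding w_def using b2 by (simp add: cmod_def)
    have "\<bar>Tf k t\<bar> \<le> 1" using TU_bound(1)[OF zw s nz nw, of k] by (simp flip: Tf_of_real)
    moreover have "\<bar>Uf k t\<bar> \<le> real (Suc k)" using TU_bound(2)[OF zw s nz nw, of k] by (simp flip: Uf_of_real)
    moreover have "1 \<le> r ^ k" using r1 by simp
    ultimately show ?thesis unfolding r_def[symmetric]
      by (metis mult_le_cancel_left1 of_nat_0_le_iff order_trans mult.commute mult_right_mono mult_1 zero_le_one)
  next
    case False
    define q where "q = sqrt (t^2 - 1)"
    have t2: "1 \<le> t^2" using False one_le_power[of t 2] by simp
    then have q2: "q^2 = t^2 - 1" unfolding q_def by simp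
    have q0: "q \<ge> 0" unfolding q_def using t2 by simp
    have qt: "q \<le> t" unfolding q_def using False real_sqrt_le_mono[of "t^2-1" "t^2"] by simp
    have qY: "q \<le> sqrt (Y^2 - 1)" unfolding q_def using False t by (intro real_sqrt_le_mono power_mono) auto
    have zw: "(t + q) * (t - q) = 1" using q2 by (simp add: algebra_simps power2_eq_square)
    have s: "(t + q) + (t - q) = 2 * t" by simp
    have nz: "norm (t + q) \<le> r" unfolding r_def using q0 qY t False by simp
    have nw: "norm (t - q) \<le> r" unfolding r_def using q0 qY t False qt by simp
    show ?thesis using TU_bound[OF zw s nz nw, of k] unfolding r_def by simp
  qed
qed



definition Gf :: "nat \<Rightarrow> real \<Rightarrow> real" where
  "Gf k y = (if k = 0 then 1 else 2 * Tf k y)"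

definition Sf :: "nat \<Rightarrow> real \<Rightarrow> real \<Rightarrow> real" where
  "Sf n x y = (\<Sum>k<n. Gf k y * Uf (n - 1 - k) x)"

lemma Sf_rec: "Sf (Suc (Suc n)) x y = 2 * x * Sf (Suc n) x y + Gf (Suc n) y - Sf n x y"
proof -
  have U: "Uf (Suc n - k) x = 2 * x * Uf (n - k) x - Uf (n - 1 - k) x" if "k < n" for k
  proof -
    from that have "Suc n - k = Suc (Suc (n - 1 - k))" "n - k = Suc (n - 1 - k)" by auto
    then show ?thesis by simp
  qed
  have split: "(\<Sum>k<n. Gf k y * Uf (Suc n - k) x)
      = 2 * x * (\<Sum>k<n. Gf k y * Uf (n - k) x) - (\<Sum>k<n. Gf k y * Uf (n - 1 - k) x)"
  proof -
    have "(\<Sum>k<n. Gf k y * Uf (Suc n - k) x)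
        = (\<Sum>k<n. 2 * x * (Gf k y * Uf (n - k) x) - Gf k y * Uf (n - 1 - k) x)"
      by (intro sum.cong) (auto simp: U algebra_simps)
    then show ?thesis by (simp add: sum_subtractf sum_distrib_left)
  qed
  have A: "Sf (Suc (Suc n)) x y = (\<Sum>k<n. Gf k y * Uf (Suc n - k) x) + Gf n y * (2 * x) + Gf (Suc n) y"
    unfolding Sf_def by (simp add: Suc_diff_le)
  have B: "Sf (Suc n) x y = (\<Sum>k<n. Gf k y * Uf (n - k) x) + Gf n y"
    unfolding Sf_def by simp
  have C: "Sf n x y = (\<Sum>k<n. Gf k y * Uf (n - 1 - k) x)"
    unfolding Sf_def by simp
  show ?thesis using A B C split by (simp add: algebra_simps)
qed

lemma Tf_diff_aux: "Tf n x - Tf n y = (x - y) * Sf n x (y::real) \<and>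
    Tf (Suc n) x - Tf (Suc n) y = (x - y) * Sf (Suc n) x y"
proof (induction n)
  case 0
  then show ?case by (simp add: Sf_def Gf_def)
next
  case (Suc n)
  have e1: "Tf (Suc n) x = Tf (Suc n) y + (x - y) * Sf (Suc n) x y" using Suc by simp
  have e2: "Tf n x = Tf n y + (x - y) * Sf n x y" using Suc by simp
  have "Tf (Suc (Suc n)) x - Tf (Suc (Suc n)) y
      = 2 * x * Tf (Suc n) x - Tf n x - 2 * y * Tf (Suc n) y + Tf n y" by simp
  also have "\<dots> = (x - y) * (2 * x * Sf (Suc n) x y + 2 * Tf (Suc n) y - Sf n x y)"
    unfolding e1 e2 by (simp add: algebra_simps)
  also have "\<dots> = (x - y) * Sf (Suc (Suc n)) x y" by (simp add: Sf_rec Gf_def)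
  finally show ?case using Suc by simp
qed

lemma Tf_diff: "Tf n x - Tf n y = (x - y) * Sf n x (y::real)"
  using Tf_diff_aux by blast

lemma isCont_Uf: "isCont (\<lambda>x. Uf m x) (x::real)"
  by (induction m x rule: Uf.induct) (auto intro!: continuous_intros)

lemma isCont_Uf_comp [continuous_intros]: "isCont f a \<Longrightarrow> isCont (\<lambda>x. Uf m (f x :: real)) a"
  using isCont_o2[OF _ isCont_Uf] by blast

lemma sum_sq: "(\<Sum>k<n. (real (n - k))^2) = real n * (real n + 1) * (2 * real n + 1) / 6"
proof (induction n)
  case 0
  then show ?case by simp
next
  case (Suc n)
  have "(\<Sum>k<Suc n. (real (Suc n - k))^2) = (real (Suc n))^2 + (\<Sum>k<n. (real (n - k))^2)"
    by (subst sum.lessThan_Suc_shift) simp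
  then show ?case using Suc by (simp add: field_simps power2_eq_square)
qed

lemma sum_b: "n \<ge> 1 \<Longrightarrow> (\<Sum>k<n. if k = 0 then 1 else 4 :: real) = 4 * real n - 3"
proof (induction n)
  case 0
  then show ?case by simp
next
  case (Suc n)
  then show ?case by (cases "n = 0") auto
qed

lemma poly_ineq:
  fixes N :: real assumes "N \<ge> 2"
  shows "16 * (N * (N + 1) * (2 * N + 1) / 6) * (4 * N - 3) \<le> (6 * N\<^sup>2 - 3)\<^sup>2"
proof -
  define t where "t = N - 2"
  have t0: "t \<ge> 0" using assms unfolding t_def by simp
  have N: "N = t + 2" unfolding t_def by simp
  have "(6 * N\<^sup>2 - 3)\<^sup>2 - 16 * (N * (N + 1) * (2 * N + 1) / 6) * (4 * N - 3)
     = (88 * t^4 + 608 * t^3 + 1400 * t^2 + 1168 * t + 246) / 6"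
    unfolding N by (simp add: field_simps eval_nat_numeral)
  moreover have "88 * t^4 + 608 * t^3 + 1400 * t^2 + 1168 * t + 246 \<ge> 0"
    using t0 by (intro add_nonneg_nonneg mult_nonneg_nonneg zero_le_power) auto
  ultimately show ?thesis by simp
qed



theorem lemma7:
  fixes \<epsilon> :: real and n d :: nat and lam :: "nat \<Rightarrow> real"
  assumes "0 \<le> \<epsilon>" and "\<epsilon> \<le> 1/3" and "n \<ge> 1"
    and "\<forall>i<d. 0 \<le> lam i \<and> lam i \<le> 1"
  shows "gamma2 d (divdiff_mat (C_poly n \<epsilon>) lam) \<le> 6 * (real n)\<^sup>2 - 3"
proof -
  have e1: "1 - \<epsilon> > 0" using assms by simp
  define Y where "Y = (1 + \<epsilon>) / (1 - \<epsilon>)"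
  have Y1: "Y \<ge> 1" unfolding Y_def using e1 assms by (simp add: field_simps)
  have Yeq: "(1 - \<epsilon>) * Y = 1 + \<epsilon>" unfolding Y_def using e1 by simp
  define q where "q = sqrt (Y^2 - 1)"
  have Y2: "0 \<le> Y^2 - 1" using Y1 by (simp add: one_le_power)
  have q0: "q \<ge> 0" unfolding q_def using Y2 by simp
  have q2: "q^2 = Y^2 - 1" unfolding q_def using Y2 by simp
  define r where "r = Y + q"
  define r' where "r' = Y - q"
  have rr': "r * r' = 1" unfolding r_def r'_def using q2 by (simp add: algebra_simps power2_eq_square)
  have r1: "r \<ge> 1" unfolding r_def using Y1 q0 by simp
  have r'0: "r' > 0"
  proof (rule ccontr)
    assume "\<not> r' > 0"
    then have "r * r' \<le> 0" using r1 by (simp add: mult_nonneg_nonpos)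
    then show False using rr' by simp
  qed
  define T0 where "T0 = Tf n Y"
  have T0eq: "2 * T0 = r ^ n + r' ^ n"
    unfolding T0_def using Tf_param[OF rr', of Y n] unfolding r_def r'_def by simp
  have T0pos: "T0 > 0" using T0eq r1 r'0
    by (smt (verit) one_le_power zero_less_power)
  define s where "s = 2 / ((1 - \<epsilon>) * T0)"
  define y where "y i = cheb_f \<epsilon> (lam i)" for i
  have yb: "-1 \<le> y i \<and> y i \<le> Y" if "i < d" for i
  proof -
    have l: "0 \<le> lam i" "lam i \<le> 1" using assms(4) that by auto
    have "-1 \<le> y i" unfolding y_def cheb_f_def using l e1 by (simp add: field_simps)
    moreover have "y i \<le> Y" unfolding y_def cheb_f_def Y_def using l e1
      by (simp add: divide_right_mono)
    ultimately show ?thesis by simp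
  qed
  have Cfun: "C_poly n \<epsilon> = (\<lambda>x. 1 - Tf n (cheb_f \<epsilon> x) / T0)"
    by (simp add: fun_eq_iff C_poly_def poly_cheb_T T0_def Y_def cheb_f_def)
  have fdiff: "cheb_f \<epsilon> a - cheb_f \<epsilon> b = (-2 * (a - b)) / (1 - \<epsilon>)" for a b
  proof -
    have "cheb_f \<epsilon> a - cheb_f \<epsilon> b = ((1 + \<epsilon> - 2 * a) - (1 + \<epsilon> - 2 * b)) / (1 - \<epsilon>)"
      unfolding cheb_f_def by (simp add: diff_divide_distrib)
    also have "\<dots> = (-2 * (a - b)) / (1 - \<epsilon>)" by (simp add: algebra_simps)
    finally show ?thesis .
  qed
  have Cdiff: "C_poly n \<epsilon> a - C_poly n \<epsilon> b = (a - b) * (s * Sf n (cheb_f \<epsilon> a) (cheb_f \<epsilon> b))" for a b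
  proof -
    have "C_poly n \<epsilon> a - C_poly n \<epsilon> b = - (Tf n (cheb_f \<epsilon> a) - Tf n (cheb_f \<epsilon> b)) / T0"
      unfolding Cfun by (simp add: diff_divide_distrib)
    also have "\<dots> = - ((-2 * (a - b)) / (1 - \<epsilon>)) * Sf n (cheb_f \<epsilon> a) (cheb_f \<epsilon> b) / T0"
      by (simp add: Tf_diff fdiff)
    also have "\<dots> = (a - b) * (s * Sf n (cheb_f \<epsilon> a) (cheb_f \<epsilon> b))"
      unfolding s_def using e1 T0pos by (simp add: field_simps)
    finally show ?thesis .
  qed
  have M: "divdiff_mat (C_poly n \<epsilon>) lam i j = s * Sf n (y i) (y j)" for i j
  proof (cases "lam i = lam j")
    case True
    have "DERIV (C_poly n \<epsilon>) (lam i) :> s * Sf n (y i) (y i)"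
      unfolding CARAT_DERIV
    proof (intro exI conjI allI)
      show "C_poly n \<epsilon> z - C_poly n \<epsilon> (lam i) = s * Sf n (cheb_f \<epsilon> z) (cheb_f \<epsilon> (lam i)) * (z - lam i)" for z
        using Cdiff by simp
      show "isCont (\<lambda>z. s * Sf n (cheb_f \<epsilon> z) (cheb_f \<epsilon> (lam i))) (lam i)"
        unfolding Sf_def cheb_f_def using e1 by (intro continuous_intros) auto
      show "s * Sf n (cheb_f \<epsilon> (lam i)) (cheb_f \<epsilon> (lam i)) = s * Sf n (y i) (y i)"
        by (simp add: y_def)
    qed
    then have "deriv (C_poly n \<epsilon>) (lam i) = s * Sf n (y i) (y i)" by (rule DERIV_imp_deriv)
    then show ?thesis using True by (simp add: divdiff_mat_def y_def)
  next
    case False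
    then show ?thesis unfolding divdiff_mat_def using Cdiff[of "lam i" "lam j"]
      by (simp add: y_def)
  qed
  define c where "c = 6 * (real n)\<^sup>2 - 3"
  define A where "A = real n * (real n + 1) * (2 * real n + 1) / 6"
  define B where "B = 4 * real n - 3"
  have n1: "real n \<ge> 1" using assms by simp
  have c0: "c > 0" unfolding c_def using one_le_power[OF n1, of 2] by linarith
  have A0: "A > 0" unfolding A_def using n1 by simp
  have B0: "B > 0" unfolding B_def using n1 by simp
  define K where "K = s * r ^ (n - 1)"
  have s0: "s > 0" unfolding s_def using e1 T0pos by simp
  have K0: "K \<ge> 0" unfolding K_def using s0 r1 by simp
  have K4: "K \<le> 4"
  proof -
    have "(1 - \<epsilon>) * r = (1 + \<epsilon>) + (1 - \<epsilon>) * q" unfolding r_def using Yeq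
      by (simp add: algebra_simps)
    moreover have "(1 - \<epsilon>) * q \<ge> 0" using e1 q0 by simp
    ultimately have er: "(1 - \<epsilon>) * r \<ge> 1" using assms(1) by linarith
    have "r ^ (n - 1) \<le> (1 - \<epsilon>) * r * r ^ (n - 1)" using er r1 by simp
    also have "\<dots> = (1 - \<epsilon>) * r ^ n" using assms(3)
      by (metis Suc_diff_le diff_Suc_1 mult.assoc power_Suc)
    also have "\<dots> \<le> (1 - \<epsilon>) * (r ^ n + r' ^ n)" using e1 r'0 by simp
    finally have "r ^ (n - 1) \<le> (1 - \<epsilon>) * (2 * T0)" using T0eq by simp
    then show ?thesis unfolding K_def s_def using e1 T0pos by (simp add: field_simps)
  qed
  have key: "K^2 * A * B \<le> c^2"
  proof (cases "n = 1")
    case True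
    have "T0 = Y" unfolding T0_def True by simp
    then have "K = 2 / (1 + \<epsilon>)" unfolding K_def s_def True using Yeq by simp
    then have "K + K * \<epsilon> = 2" using assms(1) by (simp add: field_simps)
    moreover have "0 \<le> K * \<epsilon>" using K0 assms(1) by simp
    ultimately have "K \<le> 2" by linarith
    then have "K^2 \<le> 2^2" using K0 by (intro power_mono) auto
    then show ?thesis unfolding A_def B_def c_def True by simp
  next
    case False
    then have n2: "real n \<ge> 2" using assms(3) by simp
    have "K^2 \<le> 16" using K4 K0 power_mono[of K 4 2] by simp
    then have "K^2 * A * B \<le> 16 * A * B" using A0 B0 by simp
    also have "\<dots> \<le> c^2" unfolding A_def B_def c_def using poly_ineq[OF n2] .
    finally show ?thesis .
  qed
  define \<alpha> where "\<alpha> = sqrt c / (r ^ (n - 1) * sqrt A)"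
  define \<beta> where "\<beta> = K * sqrt A / sqrt c"
  have ab: "\<alpha> * \<beta> = s" unfolding \<alpha>_def \<beta>_def K_def using c0 A0 r1 by (simp add: field_simps)
  define v where "v i k = \<alpha> * r ^ k * Uf (n - 1 - k) (y i)" for i k
  define w where "w j k = \<beta> * Gf k (y j) / r ^ k" for j k
  have fac: "divdiff_mat (C_poly n \<epsilon>) lam i j = (\<Sum>k<n. v i k * w j k)" for i j
  proof -
    have "(\<Sum>k<n. v i k * w j k) = (\<Sum>k<n. (\<alpha> * \<beta>) * (Gf k (y j) * Uf (n - 1 - k) (y i)))"
      unfolding v_def w_def using r1 by (intro sum.cong) (auto simp: field_simps)
    also have "\<dots> = s * Sf n (y i) (y j)" unfolding ab Sf_def by (simp add: sum_distrib_left)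
    finally show ?thesis using M by simp
  qed
  have vb: "(\<Sum>k<n. (v i k)^2) \<le> c" if "i < d" for i
  proof -
    have "(v i k)^2 \<le> \<alpha>^2 * (r ^ (n - 1))^2 * (real (n - k))^2" if "k < n" for k
    proof -
      have ub: "\<bar>Uf (n - 1 - k) (y i)\<bar> \<le> real (n - k) * r ^ (n - 1 - k)"
        using cheb_bounds[OF Y1, of "y i" "n - 1 - k"] yb[OF \<open>i < d\<close>] \<open>k < n\<close>
        unfolding r_def q_def by (simp add: Suc_diff_Suc)
      have "\<bar>r ^ k * Uf (n - 1 - k) (y i)\<bar> \<le> r ^ k * (real (n - k) * r ^ (n - 1 - k))"
        using ub r1 by (simp add: abs_mult)
      also have "\<dots> = real (n - k) * r ^ (n - 1)"
        using \<open>k < n\<close> by (simp add: power_add[symmetric] algebra_simps)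
      finally have le1: "\<bar>r ^ k * Uf (n - 1 - k) (y i)\<bar> \<le> \<bar>real (n - k) * r ^ (n - 1)\<bar>"
        using r1 by simp
      have "(r ^ k * Uf (n - 1 - k) (y i))^2 \<le> (real (n - k) * r ^ (n - 1))^2"
        using le1 abs_le_square_iff by blast
      then have "\<alpha>^2 * (r ^ k * Uf (n - 1 - k) (y i))^2 \<le> \<alpha>^2 * (real (n - k) * r ^ (n - 1))^2"
        by (simp add: mult_left_mono)
      moreover have "(v i k)^2 = \<alpha>^2 * (r ^ k * Uf (n - 1 - k) (y i))^2"
        unfolding v_def by (simp add: power_mult_distrib)
      ultimately show ?thesis by (simp add: power_mult_distrib ac_simps)
    qed
    then have "(\<Sum>k<n. (v i k)^2) \<le> (\<Sum>k<n. \<alpha>^2 * (r ^ (n - 1))^2 * (real (n - k))^2)"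
      by (intro sum_mono) auto
    also have "\<dots> = \<alpha>^2 * (r ^ (n - 1))^2 * A"
      by (simp only: sum_distrib_left[symmetric] sum_sq A_def)
    also have "\<dots> = c" unfolding \<alpha>_def using c0 A0 r1 by (simp add: field_simps power_mult_distrib)
    finally show ?thesis .
  qed
  have wb: "(\<Sum>k<n. (w j k)^2) \<le> c" if "j < d" for j
  proof -
    have "(w j k)^2 \<le> \<beta>^2 * (if k = 0 then 1 else 4)" for k
    proof (cases "k = 0")
      case True
      then show ?thesis unfolding w_def Gf_def by simp
    next
      case False
      have tb: "\<bar>Tf k (y j)\<bar> \<le> r ^ k"
        using cheb_bounds[OF Y1, of "y j" k] yb[OF \<open>j < d\<close>] unfolding r_def q_def by simp
      have "\<bar>Gf k (y j) / r ^ k\<bar> \<le> 2" using tb False r1 unfolding Gf_def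
        by (simp add: abs_mult divide_le_eq)
      then have "(Gf k (y j) / r ^ k)^2 \<le> 4"
        using abs_le_square_iff[of "Gf k (y j) / r ^ k" 2] by simp
      then have "\<beta>^2 * (Gf k (y j) / r ^ k)^2 \<le> \<beta>^2 * 4" by (simp add: mult_left_mono)
      moreover have "(w j k)^2 = \<beta>^2 * (Gf k (y j) / r ^ k)^2"
        unfolding w_def by (simp add: power_mult_distrib power_divide)
      ultimately show ?thesis using False by simp
    qed
    then have "(\<Sum>k<n. (w j k)^2) \<le> (\<Sum>k<n. \<beta>^2 * (if k = 0 then 1 else 4))"
      by (intro sum_mono) auto
    also have "\<dots> = \<beta>^2 * B"
      by (simp add: sum_distrib_left[symmetric] sum_b[OF assms(3)] B_def)
    also have "\<dots> = K^2 * A * B / c" unfolding \<beta>_def using c0 A0 by (simp add: power_mult_distrib power_divide)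
    also have "\<dots> \<le> c^2 / c" using key c0 by (simp add: divide_right_mono)
    also have "\<dots> = c" using c0 by (simp add: power2_eq_square)
    finally show ?thesis .
  qed
  have mem: "c \<in> {c. 0 \<le> c \<and> (\<exists>(m::nat) (v::nat \<Rightarrow> nat \<Rightarrow> real) (w::nat \<Rightarrow> nat \<Rightarrow> real).
      (\<forall>i<d. \<forall>j<d. divdiff_mat (C_poly n \<epsilon>) lam i j = (\<Sum>k<m. v i k * w j k)) \<and>
      (\<forall>i<d. (\<Sum>k<m. (v i k)\<^sup>2) \<le> c) \<and> (\<forall>j<d. (\<Sum>k<m. (w j k)\<^sup>2) \<le> c))}"
    unfolding mem_Collect_eq
  proof (rule conjI)
    show "0 \<le> c" using c0 by simp
  next
    show "\<exists>(m::nat) (v::nat \<Rightarrow> nat \<Rightarrow> real) (w::nat \<Rightarrow> nat \<Rightarrow> real).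
      (\<forall>i<d. \<forall>j<d. divdiff_mat (C_poly n \<epsilon>) lam i j = (\<Sum>k<m. v i k * w j k)) \<and>
      (\<forall>i<d. (\<Sum>k<m. (v i k)\<^sup>2) \<le> c) \<and> (\<forall>j<d. (\<Sum>k<m. (w j k)\<^sup>2) \<le> c)"
      by (rule exI[where x=n], rule exI[where x=v], rule exI[where x=w]) (use fac vb wb in auto)
  qed
  have "gamma2 d (divdiff_mat (C_poly n \<epsilon>) lam) \<le> c"
    unfolding gamma2_def by (rule cInf_lower[OF mem]) (rule bdd_belowI[of _ 0], auto)
  then show ?thesis unfolding c_def .
qed

end
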